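(* Let $G$ be a graph and $uv\in E(G)$. Then $d(G)\le d(G-uv)$, with equality if and only if $N_G[u]=N_G[v]$.
   Context: All graphs are finite, simple and undirected. A subset $D\subseteq V(G)$ is a dissociation set of $G$ if the induced subgraph $G[D]$ has maximum degree at most $1$; the empty set is a dissociation set. $d(G)$ denotes the total number of dissociation sets of $G$, including the empty set. $G-uv$ is the graph obtained from $G$ by deleting the edge $uv$ while keeping all vertices. $N_G[x]$ denotes the closed neighborhood of $x$ in $G$. *)

theory Defs
  imports Main
begin

definition simple_graph :: "'a set \<Rightarrow> 'a set set \<Rightarrow> bool" where
  "simple_graph V E \<longleftrightarrow> finite V \<and> (\<forall>e\<in>E. e \<subseteq> V \<and> card e = 2)"

definition adj :: "'a set set \<Rightarrow> 'a \<Rightarrow> 'a \<Rightarrow> bool" where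
  "adj E x y \<longleftrightarrow> {x, y} \<in> E"

definition dissociation_set :: "'a set \<Rightarrow> 'a set set \<Rightarrow> 'a set \<Rightarrow> bool" where
  "dissociation_set V E D \<longleftrightarrow> D \<subseteq> V \<and> (\<forall>x\<in>D. card {y\<in>D. adj E x y} \<le> 1)"

definition num_diss :: "'a set \<Rightarrow> 'a set set \<Rightarrow> nat" where
  "num_diss V E = card {D. dissociation_set V E D}"

definition closed_nbhd :: "'a set \<Rightarrow> 'a set set \<Rightarrow> 'a \<Rightarrow> 'a set" where
  "closed_nbhd V E x = {y\<in>V. adj E x y} \<union> {x}"

end

theory Submission
  imports Defs
begin

lemma adj_sym: "adj E x y = adj E y x"
  unfolding adj_def by (simp add: insert_commute)

lemma adj_irrefl: "simple_graph V E \<Longrightarrow> \<not> adj E x x"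
  unfolding adj_def simple_graph_def by force

lemma adj_V: "simple_graph V E \<Longrightarrow> adj E x y \<Longrightarrow> x \<in> V \<and> y \<in> V"
  unfolding adj_def simple_graph_def by blast

lemma diss_mono:
  assumes "simple_graph V E" "dissociation_set V E D"
  shows "dissociation_set V (E - X) D"
  unfolding dissociation_set_def
proof (intro conjI ballI)
  show "D \<subseteq> V" using assms(2) by (simp add: dissociation_set_def)
  fix x assume x: "x \<in> D"
  have fin: "finite D" using assms \<open>D \<subseteq> V\<close>
    by (meson finite_subset simple_graph_def dissociation_set_def)
  have "card {y\<in>D. adj (E - X) x y} \<le> card {y\<in>D. adj E x y}"
    by (rule card_mono) (use fin in \<open>auto simp: adj_def\<close>)
  also have "\<dots> \<le> 1" using assms(2) x by (simp add: dissociation_set_def)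
  finally show "card {y\<in>D. adj (E - X) x y} \<le> 1" .
qed

lemma witness:
  assumes G: "simple_graph V E" and e: "{u,v} \<in> E" and w: "w \<in> V"
    and uw: "adj E u w" and vw: "\<not> adj E v w" and wu: "w \<noteq> u" and wv: "w \<noteq> v"
  shows "dissociation_set V (E-{{u,v}}) {u,v,w} \<and> \<not> dissociation_set V E {u,v,w}"
proof
  have uv: "u \<noteq> v" using G e unfolding simple_graph_def by fastforce
  have uV: "u \<in> V" "v \<in> V" using G e unfolding simple_graph_def by auto
  let ?E = "E-{{u,v}}"
  have irr: "\<And>x. \<not> adj ?E x x" using adj_irrefl[OF G] unfolding adj_def by auto
  have nuv: "\<not> adj ?E u v" "\<not> adj ?E v u" unfolding adj_def by (auto simp: insert_commute)
  have nvw: "\<not> adj ?E v w" "\<not> adj ?E w v" using vw unfolding adj_def by (auto simp: insert_commute)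
  have a1: "{y\<in>{u,v,w}. adj ?E u y} \<subseteq> {w}" using irr nuv by auto
  have a2: "{y\<in>{u,v,w}. adj ?E v y} \<subseteq> {}" using irr nuv nvw by auto
  have a3: "{y\<in>{u,v,w}. adj ?E w y} \<subseteq> {u}" using irr nvw by auto
  have c: "card A \<le> 1" if "A \<subseteq> {x}" for A x
    using card_mono[OF _ that] by simp
  show "dissociation_set V ?E {u,v,w}"
    unfolding dissociation_set_def using uV w c[OF a1] c[OF a3] c[of _ u, OF order.trans[OF a2]] by auto
  have "{v,w} \<subseteq> {y\<in>{u,v,w}. adj E u y}" using e uw unfolding adj_def by auto
  hence "card {v,w} \<le> card {y\<in>{u,v,w}. adj E u y}" by (intro card_mono) auto
  hence "card {y\<in>{u,v,w}. adj E u y} \<ge> 2" using wv by simp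
  thus "\<not> dissociation_set V E {u,v,w}" unfolding dissociation_set_def by auto
qed

theorem lemma2p5:
  fixes V :: "'a set" and E :: "'a set set" and u v :: 'a
  assumes "simple_graph V E" and "{u, v} \<in> E"
  shows "num_diss V E \<le> num_diss V (E - {{u, v}})
    \<and> (num_diss V E = num_diss V (E - {{u, v}})
         \<longleftrightarrow> closed_nbhd V E u = closed_nbhd V E v)"
proof -
  note G = assms(1) and e = assms(2)
  let ?E = "E-{{u,v}}"
  let ?A = "{D. dissociation_set V E D}" and ?B = "{D. dissociation_set V ?E D}"
  have finV: "finite V" using G by (simp add: simple_graph_def)
  have sub: "?A \<subseteq> ?B" using diss_mono[OF G] by blast
  have finB: "finite ?B"
    by (rule finite_subset[of _ "Pow V"]) (use finV in \<open>auto simp: dissociation_set_def\<close>)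
  have le: "num_diss V E \<le> num_diss V ?E"
    unfolding num_diss_def by (rule card_mono[OF finB sub])
  have eq_iff: "num_diss V E = num_diss V ?E \<longleftrightarrow> ?B \<subseteq> ?A"
    unfolding num_diss_def
  proof
    assume "card ?A = card ?B" then show "?B \<subseteq> ?A" using card_subset_eq[OF finB sub] by blast
  next
    assume "?B \<subseteq> ?A" then have "?A = ?B" using sub by blast
    then show "card ?A = card ?B" by simp
  qed
  have uv: "u \<noteq> v" using G e unfolding simple_graph_def by fastforce
  have uV: "u \<in> V" "v \<in> V" using G e unfolding simple_graph_def by auto
  have "?B \<subseteq> ?A \<longleftrightarrow> closed_nbhd V E u = closed_nbhd V E v"
  proof
    assume BA: "?B \<subseteq> ?A"
    show "closed_nbhd V E u = closed_nbhd V E v"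
    proof (rule ccontr)
      assume ne: "closed_nbhd V E u \<noteq> closed_nbhd V E v"
      have euv: "adj E u v" "adj E v u" using e unfolding adj_def by (auto simp: insert_commute)
      obtain a b w where ab: "{a,b} = {u,v}" and w: "w \<in> V" "adj E a w" "\<not> adj E b w" "w \<noteq> a" "w \<noteq> b"
      proof -
        from ne obtain w where "w \<in> closed_nbhd V E u \<and> w \<notin> closed_nbhd V E v \<or>
                                w \<in> closed_nbhd V E v \<and> w \<notin> closed_nbhd V E u" by blast
        thus ?thesis
        proof
          assume h: "w \<in> closed_nbhd V E u \<and> w \<notin> closed_nbhd V E v"
          thus ?thesis using that[of u v w] euv uV unfolding closed_nbhd_def by auto
        next
          assume h: "w \<in> closed_nbhd V E v \<and> w \<notin> closed_nbhd V E u"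
          thus ?thesis using that[of v u w] euv uV unfolding closed_nbhd_def
            by (auto simp: insert_commute)
        qed
      qed
      have "dissociation_set V (E-{{a,b}}) {a,b,w} \<and> \<not> dissociation_set V E {a,b,w}"
        by (rule witness[OF G _ w]) (use ab e in auto)
      hence "{a,b,w} \<in> ?B" "{a,b,w} \<notin> ?A" using ab by auto
      thus False using BA by blast
    qed
  next
    assume N: "closed_nbhd V E u = closed_nbhd V E v"
    show "?B \<subseteq> ?A"
    proof
      fix D assume "D \<in> ?B"
      hence DB: "dissociation_set V ?E D" by simp
      show "D \<in> ?A"
      proof (rule ccontr)
        assume nA: "D \<notin> ?A"
        have DV: "D \<subseteq> V" using DB by (simp add: dissociation_set_def)
        have finD: "finite D" using finV DV finite_subset by blast
        from nA DV obtain x where x: "x \<in> D" "\<not> card {y\<in>D. adj E x y} \<le> 1"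
          by (auto simp: dissociation_set_def)
        have cx: "card {y\<in>D. adj ?E x y} \<le> 1" using DB x by (simp add: dissociation_set_def)
        have diffset: "{y\<in>D. adj E x y} \<noteq> {y\<in>D. adj ?E x y}" using x(2) cx by (metis (no_types))
        then obtain y where y: "y \<in> D" "adj E x y" "\<not> adj ?E x y" unfolding adj_def by auto
        hence xy: "{x,y} = {u,v}" unfolding adj_def by auto
        hence uD: "u \<in> D" "v \<in> D" using x y by auto
        have "\<exists>z. z \<in> D \<and> adj E x z \<and> z \<noteq> y"
        proof (rule ccontr)
          assume "\<not> ?thesis"
          hence "{y\<in>D. adj E x y} \<subseteq> {y}" by auto
          hence "card {y\<in>D. adj E x y} \<le> 1"
            using card_mono[of "{y}"] by fastforce
          thus False using x by simp
        qed
        then obtain z where z: "z \<in> D" "adj E x z" "z \<noteq> y" by blast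
        have zx: "z \<noteq> x" using z adj_irrefl[OF G] by auto
        have zuv: "z \<noteq> u" "z \<noteq> v" using zx z xy by (auto simp: doubleton_eq_iff)
        have zV: "z \<in> V" using z DV by auto
        have both: "adj E u z" "adj E v z"
        proof -
          have "z \<in> closed_nbhd V E x" using zV z unfolding closed_nbhd_def by auto
          hence "z \<in> closed_nbhd V E u" "z \<in> closed_nbhd V E v" using N xy
            by (auto simp: doubleton_eq_iff)
          thus "adj E u z" "adj E v z" using zuv unfolding closed_nbhd_def by auto
        qed
        have bothE: "adj ?E z u" "adj ?E z v"
          using both zuv uv unfolding adj_def by (auto simp: insert_commute doubleton_eq_iff)
        have "{u,v} \<subseteq> {y\<in>D. adj ?E z y}" using bothE uD by auto
        hence "card {u,v} \<le> card {y\<in>D. adj ?E z y}" by (intro card_mono) (use finD in auto)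
        hence "card {y\<in>D. adj ?E z y} \<ge> 2" using uv by simp
        thus False using DB z by (auto simp: dissociation_set_def)
      qed
    qed
  qed
  thus ?thesis using le eq_iff by simp
qed

end
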